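(* Let $\mathcal{E}=\{E_1,\ldots,E_m\}$ be a set of two-outcome measurements and let $T$ be a positive integer. Then there exists a test procedure $Q$ such that: (i) $Q$ takes a state $\rho_0$ as input, applies at most $T$ measurements from $\mathcal{E}$, and returns either "success" or "failure"; (ii) if $\epsilon\ge0$ and $\operatorname{Tr}(E_i\rho_0)\ge1-\epsilon$ for all $i$, then $Q$ succeeds with probability at least $1-T\sqrt{\epsilon}$; (iii) if $Q$ succeeds on input $\rho_0$ with probability at least $\lambda>0$, then conditioned on succeeding, $Q$ outputs a state $\sigma$ such that $\operatorname{Tr}(E_i\sigma)\ge1-2\sqrt{m/(\lambda T)}$ for all $i\in\{1,\ldots,m\}$.
   Context: A two-outcome measurement on a quantum system is a Hermitian operator $E$ with eigenvalues in $[0,1]$; applied to state $\rho$ it accepts with probability $\operatorname{Tr}(E\rho)$ and the state is updated to the corresponding post-measurement state. *)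

theory Defs
  imports "HOL-Analysis.Analysis"
begin

definition adj :: "complex^'n^'n \<Rightarrow> complex^'n^'n" where
  "adj A = (\<chi> i j. cnj (A $ j $ i))"

definition hermitian :: "complex^'n^'n \<Rightarrow> bool" where
  "hermitian A \<longleftrightarrow> adj A = A"

definition is_eigenvalue :: "complex^'n^'n \<Rightarrow> complex \<Rightarrow> bool" where
  "is_eigenvalue A c \<longleftrightarrow> (\<exists>v. v \<noteq> 0 \<and> A *v v = (\<chi> j. c * v $ j))"

definition is_measurement :: "complex^'n^'n \<Rightarrow> bool" where
  "is_measurement E \<longleftrightarrow> hermitian E \<and>
     (\<forall>c. is_eigenvalue E c \<longrightarrow> c \<in> \<real> \<and> 0 \<le> Re c \<and> Re c \<le> 1)"

definition psd :: "complex^'n^'n \<Rightarrow> bool" where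
  "psd A \<longleftrightarrow> hermitian A \<and> (\<forall>c. is_eigenvalue A c \<longrightarrow> c \<in> \<real> \<and> 0 \<le> Re c)"

definition density :: "complex^'n^'n \<Rightarrow> bool" where
  "density \<rho> \<longleftrightarrow> psd \<rho> \<and> trace \<rho> = 1"

definition psd_sqrt :: "complex^'n^'n \<Rightarrow> complex^'n^'n" where
  "psd_sqrt A = (SOME S. psd S \<and> S ** S = A)"

definition acc_prob :: "complex^'n^'n \<Rightarrow> complex^'n^'n \<Rightarrow> real" where
  "acc_prob E \<rho> = Re (trace (E ** \<rho>))"

text \<open>A deterministic adaptive test procedure: a decision tree. Meas i a r applies
  measurement number i, continues with a on acceptance and with r on rejection.\<close>
datatype proc = Success | Failure | Meas nat proc proc

fun uses_below :: "nat \<Rightarrow> proc \<Rightarrow> bool" where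
  "uses_below m Success = True"
| "uses_below m Failure = True"
| "uses_below m (Meas i a r) = (i < m \<and> uses_below m a \<and> uses_below m r)"

fun depth :: "proc \<Rightarrow> nat" where
  "depth Success = 0"
| "depth Failure = 0"
| "depth (Meas i a r) = Suc (max (depth a) (depth r))"

text \<open>Unnormalised post-measurement state restricted to successful runs
  (Lueders rule: accept -> sqrt E rho sqrt E, reject -> sqrt(1-E) rho sqrt(1-E)).\<close>
fun succ_part :: "(nat \<Rightarrow> complex^'n^'n) \<Rightarrow> proc \<Rightarrow> complex^'n^'n \<Rightarrow> complex^'n^'n" where
  "succ_part E Success \<rho> = \<rho>"
| "succ_part E Failure \<rho> = 0"
| "succ_part E (Meas i a r) \<rho> =
     succ_part E a (psd_sqrt (E i) ** \<rho> ** psd_sqrt (E i)) +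
     succ_part E r (psd_sqrt (mat 1 - E i) ** \<rho> ** psd_sqrt (mat 1 - E i))"

text \<open>A (randomised) test procedure: a finite probability distribution over decision
  trees (classical randomness can be drawn up front), given as weighted list.\<close>
type_synonym test = "(real \<times> proc) list"

definition valid_test :: "nat \<Rightarrow> nat \<Rightarrow> test \<Rightarrow> bool" where
  "valid_test m T Q \<longleftrightarrow> (\<forall>(w,p)\<in>set Q. 0 \<le> w \<and> uses_below m p \<and> depth p \<le> T)
       \<and> (\<Sum>(w,p)\<leftarrow>Q. w) = 1"

definition succ_state :: "(nat \<Rightarrow> complex^'n^'n) \<Rightarrow> test \<Rightarrow> complex^'n^'n \<Rightarrow> complex^'n^'n" where
  "succ_state E Q \<rho> = (\<Sum>(w,p)\<leftarrow>Q. w *\<^sub>R succ_part E p \<rho>)"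

definition succ_prob :: "(nat \<Rightarrow> complex^'n^'n) \<Rightarrow> test \<Rightarrow> complex^'n^'n \<Rightarrow> real" where
  "succ_prob E Q \<rho> = Re (trace (succ_state E Q \<rho>))"

definition out_state :: "(nat \<Rightarrow> complex^'n^'n) \<Rightarrow> test \<Rightarrow> complex^'n^'n \<Rightarrow> complex^'n^'n" where
  "out_state E Q \<rho> = (1 / succ_prob E Q \<rho>) *\<^sub>R succ_state E Q \<rho>"

end

theory Submission
  imports Defs
begin


definition cinner :: "complex^'n \<Rightarrow> complex^'n \<Rightarrow> complex" where
  "cinner x y = (\<Sum>i\<in>UNIV. cnj (x$i) * y$i)"

definition diagm :: "('n \<Rightarrow> real) \<Rightarrow> complex^'n^'n" where
  "diagm d = (\<chi> i j. if i = j then complex_of_real (d i) else 0)"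

definition pos :: "complex^'n^'n \<Rightarrow> bool" where
  "pos A \<longleftrightarrow> (\<forall>v. 0 \<le> Re (cinner v (A *v v)))"

lemma cscale: "(r::real) *\<^sub>R (z::complex) = of_real r * z"
  by (rule scaleR_conv_of_real)

lemma vsc: "((r::real) *\<^sub>R (x::complex^'n))$i = of_real r * x$i"
  by (simp add: cscale)

lemma msc: "((r::real) *\<^sub>R (x::complex^'n^'m))$i$j = of_real r * x$i$j"
  by (simp add: cscale)

lemma cinner_adj: "cinner x (adj C *v y) = cinner (C *v x) y"
proof -
  have "cinner x (adj C *v y) = (\<Sum>i\<in>UNIV. \<Sum>j\<in>UNIV. cnj (x$i) * cnj (C$j$i) * y$j)"
    by (simp add: cinner_def adj_def matrix_vector_mult_def sum_distrib_left mult.assoc)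
  also have "\<dots> = (\<Sum>j\<in>UNIV. \<Sum>i\<in>UNIV. cnj (x$i) * cnj (C$j$i) * y$j)" by (rule sum.swap)
  also have "\<dots> = cinner (C *v x) y"
    by (simp add: cinner_def matrix_vector_mult_def sum_distrib_right sum_distrib_left mult_ac)
  finally show ?thesis .
qed

lemma adj_adj[simp]: "adj (adj A) = A"
  by (simp add: adj_def vec_eq_iff)

lemma adj_mult: "adj (A ** B) = adj B ** adj A"
  by (simp add: adj_def matrix_matrix_mult_def vec_eq_iff mult.commute)

lemma adj_add: "adj (A + B) = adj A + adj B"
  by (simp add: adj_def vec_eq_iff)

lemma adj_diff: "adj (A - B) = adj A - adj B"
  by (simp add: adj_def vec_eq_iff)

lemma adj_scaleR: "adj (c *\<^sub>R A) = c *\<^sub>R adj A"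
  by (simp add: adj_def vec_eq_iff msc)

lemma adj_mat1[simp]: "adj (mat 1) = mat 1"
  by (simp add: adj_def mat_def vec_eq_iff)

lemma adj_diagm[simp]: "adj (diagm d) = diagm d"
  by (simp add: adj_def diagm_def vec_eq_iff)

lemma adj_sum: "adj (sum f I) = sum (\<lambda>i. adj (f i)) I"
  by (induction I rule: infinite_finite_induct) (auto simp: adj_add adj_def vec_eq_iff)

lemma hermitian_cinner: "hermitian A \<Longrightarrow> cinner x (A *v y) = cinner (A *v x) y"
  by (metis cinner_adj hermitian_def)

lemma cinner_commute: "cinner y x = cnj (cinner x y)"
  by (simp add: cinner_def mult.commute)

lemma cinner_add_right: "cinner x (y + z) = cinner x y + cinner x z"
  by (simp add: cinner_def algebra_simps sum.distrib)
lemma cinner_diff_right: "cinner x (y - z) = cinner x y - cinner x z"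
  by (simp add: cinner_def algebra_simps sum_subtractf)
lemma cinner_add_left: "cinner (x + y) z = cinner x z + cinner y z"
  by (simp add: cinner_def algebra_simps sum.distrib)
lemma cinner_diff_left: "cinner (x - y) z = cinner x z - cinner y z"
  by (simp add: cinner_def algebra_simps sum_subtractf)
lemma cinner_smult_right: "cinner x (c *s y) = c * cinner x y"
  by (simp add: cinner_def sum_distrib_left mult_ac)
lemma cinner_smult_left: "cinner (c *s x) y = cnj c * cinner x y"
  by (simp add: cinner_def sum_distrib_left mult_ac)
lemma cinner_scaleR_right: "cinner x (r *\<^sub>R y) = of_real r * cinner x y"
  by (simp add: cinner_def sum_distrib_left mult_ac vsc cscale)
lemma cinner_scaleR_left: "cinner (r *\<^sub>R x) y = of_real r * cinner x y"
  by (simp add: cinner_def sum_distrib_left mult_ac vsc cscale)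
lemma cinner_zero_right[simp]: "cinner x 0 = 0" by (simp add: cinner_def)
lemma cinner_zero_left[simp]: "cinner 0 x = 0" by (simp add: cinner_def)

lemma Re_cinner: "Re (cinner x y) = inner x y"
  by (simp add: cinner_def inner_vec_def inner_complex_def)

lemma cinner_self: "cinner x x = complex_of_real ((norm x)^2)"
proof -
  have "cinner x x = (\<Sum>i\<in>UNIV. complex_of_real ((cmod (x$i))^2))"
    by (simp add: cinner_def complex_norm_square mult.commute del: of_real_power)
  also have "\<dots> = complex_of_real ((norm x)^2)"
    by (simp add: norm_vec_def L2_set_def sum_nonneg)
  finally show ?thesis .
qed

lemma cinner_self_eq_0: "cinner x x = 0 \<longleftrightarrow> x = 0"
  by (simp add: cinner_self)

lemma mvec_smult: "A *v (c *s x) = c *s (A *v (x::complex^'n))"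
  by (simp add: matrix_vector_mult_def vec_eq_iff sum_distrib_left mult_ac)

lemma mvec_scaleR: "A *v (c *\<^sub>R x) = c *\<^sub>R (A *v (x::complex^'n))"
  by (simp add: matrix_vector_mult_def vec_eq_iff sum_distrib_left mult_ac vsc cscale)

lemma hermitian_cinner_real: "hermitian A \<Longrightarrow> cinner x (A *v x) \<in> \<real>"
  by (metis Reals_cnj_iff cinner_commute hermitian_cinner)



lemma cinner_zero_if_orth:
  assumes "inner (v::complex^'n) x = 0" "inner (\<i> *s v) x = 0"
  shows "cinner v x = 0"
proof -
  have "Re (cinner v x) = 0" using assms(1) by (simp add: Re_cinner)
  moreover have "Re (cinner (\<i> *s v) x) = 0" using assms(2) by (simp add: Re_cinner)
  hence "Im (cinner v x) = 0" by (simp add: cinner_smult_left)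
  ultimately show ?thesis by (simp add: complex_eq_iff)
qed

lemma exists_orth_unit:
  fixes v :: "'k \<Rightarrow> complex^'n"
  assumes fin: "finite K" and card: "card K < CARD('n)"
  shows "\<exists>x. norm x = 1 \<and> (\<forall>j\<in>K. cinner (v j) x = 0)"
proof -
  define S where "S = v ` K \<union> (\<lambda>j. \<i> *s v j) ` K"
  have fS: "finite S" using fin by (simp add: S_def)
  have "card S \<le> card (v ` K) + card ((\<lambda>j. \<i> *s v j) ` K)"
    unfolding S_def by (rule card_Un_le)
  also have "\<dots> \<le> card K + card K" using fin by (intro add_mono card_image_le) auto
  finally have "card S < DIM(complex^'n)" using card by simp
  hence "dim S < DIM(complex^'n)" using dim_le_card'[OF fS] by linarith
  then obtain x :: "complex^'n" where x0: "x \<noteq> 0" and orth: "\<And>y. y \<in> span S \<Longrightarrow> orthogonal x y"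
    using orthogonal_to_subspace_exists by blast
  have orthS: "\<And>y. y \<in> S \<Longrightarrow> inner y x = 0"
    using orth span_base by (metis inner_commute orthogonal_def)
  define x' where "x' = (1 / norm x) *\<^sub>R x"
  have "norm x' = 1" using x0 by (simp add: x'_def)
  moreover have "\<forall>j\<in>K. cinner (v j) x' = 0"
  proof
    fix j assume j: "j \<in> K"
    have "cinner (v j) x = 0"
      by (rule cinner_zero_if_orth; rule orthS; use j in \<open>auto simp: S_def\<close>)
    thus "cinner (v j) x' = 0" by (simp add: x'_def cinner_scaleR_right)
  qed
  ultimately show ?thesis by blast
qed

lemma cinner_scaleR_both:
  "cinner (r *\<^sub>R x) (A *v (r *\<^sub>R x)) = of_real (r^2) * cinner x (A *v x)"
  by (simp add: mvec_scaleR cinner_scaleR_left cinner_scaleR_right power2_eq_square)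

lemma min_eig:
  fixes A :: "complex^'n^'n"
  assumes herm: "hermitian A" and fin: "finite K" and card: "card K < CARD('n)"
    and eig: "\<forall>j\<in>K. A *v v j = complex_of_real (d j) *s v j"
  shows "\<exists>x \<mu>. norm x = 1 \<and> (\<forall>j\<in>K. cinner (v j) x = 0) \<and> A *v x = complex_of_real \<mu> *s x"
proof -
  define W where "W = {x. \<forall>j\<in>K. cinner (v j) x = 0}"
  define C where "C = W \<inter> sphere 0 1"
  define q where "q x = Re (cinner x (A *v x))" for x
  have "W = (\<Inter>j\<in>K. {x. cinner (v j) x = 0})" by (auto simp: W_def)
  moreover have "closed {x. cinner (v j) x = 0}" for j
    by (rule closed_Collect_eq) (auto simp: cinner_def intro!: continuous_intros)
  ultimately have "closed W" by auto
  hence cC: "compact C" unfolding C_def by (intro closed_Int_compact compact_sphere)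
  have neC: "C \<noteq> {}" using exists_orth_unit[OF fin card, of v] by (auto simp: C_def W_def)
  have "continuous_on UNIV q"
    unfolding q_def cinner_def matrix_vector_mult_def by (intro continuous_intros)
  hence ctC: "continuous_on C q" by (rule continuous_on_subset) simp
  obtain x0 where x0C: "x0 \<in> C" and x0min: "\<And>y. y \<in> C \<Longrightarrow> q x0 \<le> q y"
    using continuous_attains_inf[OF cC neC ctC] by blast
  define \<mu> where "\<mu> = q x0"
  have x0W: "x0 \<in> W" and nx0: "norm x0 = 1" using x0C by (auto simp: C_def)
  have Wsub: "a - t *\<^sub>R b \<in> W" if "a \<in> W" "b \<in> W" for a b t
    using that by (auto simp: W_def cinner_diff_right cinner_scaleR_right)
  have Wscale: "t *\<^sub>R b \<in> W" if "b \<in> W" for b t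
    using that by (auto simp: W_def cinner_scaleR_right)
  have qscale: "q (r *\<^sub>R x) = r^2 * q x" for r x
    by (simp add: q_def cinner_scaleR_both)
  have Ray: "\<mu> * (norm y)^2 \<le> q y" if "y \<in> W" for y
  proof (cases "y = 0")
    case True thus ?thesis by (simp add: q_def)
  next
    case False
    define y' where "y' = (1 / norm y) *\<^sub>R y"
    have "y' \<in> C" using False that Wscale by (auto simp: C_def y'_def)
    hence "\<mu> \<le> q y'" using x0min by (simp add: \<mu>_def)
    also have "q y' = q y / (norm y)^2" by (simp add: y'_def qscale power_divide)
    finally show ?thesis using False by (simp add: field_simps)
  qed
  define B where "B y = A *v y - \<mu> *\<^sub>R y" for y
  define f where "f y = Re (cinner y (B y))" for y
  have fq: "f y = q y - \<mu> * (norm y)^2" for y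
    by (simp add: f_def B_def q_def cinner_diff_right cinner_scaleR_right cinner_self)
  have fW: "f y \<ge> 0" if "y \<in> W" for y using Ray[OF that] fq[of y] by simp
  have fx0: "f x0 = 0" using fq[of x0] nx0 by (simp add: \<mu>_def)
  have Bherm: "cinner a (B b) = cinner (B a) b" for a b
    by (simp add: B_def cinner_diff_right cinner_diff_left cinner_scaleR_right cinner_scaleR_left
        hermitian_cinner[OF herm])
  have Blin: "B (a - t *\<^sub>R b) = B a - t *\<^sub>R B b" for a b t
    by (simp add: B_def matrix_vector_mult_diff_distrib mvec_scaleR algebra_simps)
  define z where "z = B x0"
  have zW: "z \<in> W"
    unfolding W_def
  proof (intro CollectI ballI)
    fix j assume j: "j \<in> K"
    have "cinner (v j) (A *v x0) = cinner (A *v v j) x0" by (rule hermitian_cinner[OF herm])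
    also have "\<dots> = 0" using eig j x0W by (simp add: W_def cinner_smult_left)
    finally have "cinner (v j) (A *v x0) = 0" .
    thus "cinner (v j) z = 0"
      using x0W j by (simp add: z_def B_def W_def cinner_diff_right cinner_scaleR_right)
  qed
  define a where "a = (norm z)^2"
  define c where "c = f z"
  have c0: "c \<ge> 0" using fW zW by (simp add: c_def)
  have expand: "f (x0 - t *\<^sub>R z) = - 2 * t * a + t^2 * c" for t
  proof -
    have "cinner (x0 - t *\<^sub>R z) (B (x0 - t *\<^sub>R z)) =
        cinner x0 (B x0) - of_real t * cinner x0 (B z) - of_real t * cinner z (B x0)
        + of_real t * of_real t * cinner z (B z)"
      unfolding Blin cinner_diff_left cinner_diff_right cinner_scaleR_left cinner_scaleR_right
      by (simp add: algebra_simps)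
    moreover have "Re (cinner x0 (B z)) = a"
      using Bherm[of x0 z] by (metis Re_cinner a_def cinner_self inner_commute of_real_Re Re_complex_of_real z_def)
    moreover have "Re (cinner z (B x0)) = a" by (simp add: z_def[symmetric] a_def cinner_self)
    ultimately show ?thesis using fx0 by (simp add: f_def c_def power2_eq_square)
  qed
  have "a = 0"
  proof (rule ccontr)
    assume "a \<noteq> 0"
    hence apos: "a > 0" by (simp add: a_def)
    define t where "t = a / (c + 1)"
    have tpos: "t > 0" using apos c0 by (simp add: t_def)
    have "t * c < a" using apos c0 by (simp add: t_def field_simps)
    hence "t * (t * c) < t * a" using tpos by simp
    hence "- 2 * t * a + t^2 * c < 0" using tpos apos by (simp add: power2_eq_square algebra_simps)
    moreover have "f (x0 - t *\<^sub>R z) \<ge> 0" by (rule fW[OF Wsub[OF x0W zW]])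
    ultimately show False using expand by simp
  qed
  hence "z = 0" by (simp add: a_def)
  hence "A *v x0 = complex_of_real \<mu> *s x0"
    by (simp add: z_def B_def vec_eq_iff cscale)
  thus ?thesis using nx0 x0W by (auto simp: W_def)
qed



lemma spectral_family:
  fixes A :: "complex^'n^'n" assumes herm: "hermitian A"
  shows "\<exists>(v::'n \<Rightarrow> complex^'n) d. (\<forall>k. norm (v k) = 1 \<and> A *v v k = complex_of_real (d k) *s v k)
     \<and> (\<forall>k l. k \<noteq> l \<longrightarrow> cinner (v k) (v l) = 0)"
proof -
  have "\<exists>(v::'n \<Rightarrow> complex^'n) d. (\<forall>k\<in>K. norm (v k) = 1 \<and> A *v v k = complex_of_real (d k) *s v k)
     \<and> (\<forall>k\<in>K. \<forall>l\<in>K. k \<noteq> l \<longrightarrow> cinner (v k) (v l) = 0)" if "finite K" for K :: "'n set"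
    using that
  proof (induction K rule: finite_induct)
    case empty show ?case by simp
  next
    case (insert k K)
    from insert.IH obtain v d where vK: "\<forall>k\<in>K. norm (v k) = 1 \<and> A *v v k = complex_of_real (d k) *s v k"
      and oK: "\<forall>k\<in>K. \<forall>l\<in>K. k \<noteq> l \<longrightarrow> cinner (v k) (v l) = 0" by (elim exE conjE)
    have "card (insert k K) \<le> CARD('n)" by (rule card_mono) auto
    hence cK: "card K < CARD('n)" using insert by simp
    have eigK: "\<forall>j\<in>K. A *v v j = complex_of_real (d j) *s v j" using vK by simp
    obtain x \<mu> where x1: "norm x = 1" and xo: "\<forall>j\<in>K. cinner (v j) x = 0"
      and xe: "A *v x = complex_of_real \<mu> *s x"
      using min_eig[OF herm insert(1) cK eigK] by blast
    have xo': "\<forall>j\<in>K. cinner x (v j) = 0" using xo by (simp add: cinner_commute[of x])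
    have P1: "\<forall>j\<in>insert k K. norm ((v(k:=x)) j) = 1 \<and> A *v (v(k:=x)) j = complex_of_real ((d(k:=\<mu>)) j) *s (v(k:=x)) j"
      using vK x1 xe by simp
    have P2: "\<forall>j\<in>insert k K. \<forall>l\<in>insert k K. j \<noteq> l \<longrightarrow> cinner ((v(k:=x)) j) ((v(k:=x)) l) = 0"
      using oK xo xo' insert(2) by auto
    show ?case using P1 P2 by blast
  qed
  from this[of UNIV] show ?thesis by simp
qed

lemma cinner_unit: "norm x = 1 \<Longrightarrow> cinner x x = 1"
  by (simp add: cinner_self)

lemma spectral:
  fixes A :: "complex^'n^'n" assumes herm: "hermitian A"
  shows "\<exists>U d. adj U ** U = mat 1 \<and> U ** adj U = mat 1 \<and> A = U ** diagm d ** adj U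
     \<and> (\<forall>k. is_eigenvalue A (complex_of_real (d k)))"
proof -
  from spectral_family[OF herm] obtain v :: "'n \<Rightarrow> complex^'n" and d where v1': "\<forall>k. norm (v k) = 1 \<and> A *v v k = complex_of_real (d k) *s v k"
    and vo': "\<forall>k l. k \<noteq> l \<longrightarrow> cinner (v k) (v l) = 0"
    by auto
  have v1: "\<And>k. norm (v k) = 1" and ve: "\<And>k. A *v v k = complex_of_real (d k) *s v k"
    and vo: "\<And>k l. k \<noteq> l \<Longrightarrow> cinner (v k) (v l) = 0" using v1' vo' by simp_all
  define U :: "complex^'n^'n" where "U = (\<chi> i k. v k $ i)"
  have "(adj U ** U) $ k $ l = cinner (v k) (v l)" for k l
    by (simp add: U_def adj_def matrix_matrix_mult_def cinner_def)
  moreover have "cinner (v k) (v k) = 1" for k using v1[of k] by (rule cinner_unit)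
  ultimately have UU: "adj U ** U = mat 1"
    using vo by (auto simp: vec_eq_iff mat_def)
  hence UU': "U ** adj U = mat 1" by (simp add: matrix_left_right_inverse)
  have "(A ** U) $ i $ k = (A *v v k) $ i" for i k
    by (simp add: U_def matrix_matrix_mult_def matrix_vector_mult_def)
  moreover have "(U ** diagm d) $ i $ k = complex_of_real (d k) * v k $ i" for i k
    by (simp add: U_def matrix_matrix_mult_def diagm_def if_distrib if_distribR sum.delta' cong: if_cong)
  ultimately have AU: "A ** U = U ** diagm d" using ve by (simp add: vec_eq_iff mult.commute)
  have "A = A ** (U ** adj U)" by (simp add: UU')
  also have "\<dots> = U ** diagm d ** adj U" by (simp add: matrix_mul_assoc AU)
  finally have A: "A = U ** diagm d ** adj U" .
  have "is_eigenvalue A (complex_of_real (d k))" for k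
    unfolding is_eigenvalue_def
    apply (rule exI[of _ "v k"])
    using v1[of k] ve[of k] by (auto simp: vector_scalar_mult_def)
  hence "\<forall>k. is_eigenvalue A (complex_of_real (d k))" by simp
  thus ?thesis using UU UU' A by (intro exI[of _ U] exI[of _ d] conjI)
qed

lemma Re_cinner_diagm: "Re (cinner y (diagm d *v y)) = (\<Sum>i\<in>UNIV. d i * (cmod (y$i))^2)"
proof -
  have "cinner y (diagm d *v y) = (\<Sum>i\<in>UNIV. complex_of_real (d i) * (cnj (y$i) * y$i))"
    by (simp add: cinner_def diagm_def matrix_vector_mult_def if_distrib if_distribR sum.delta' mult_ac cong: if_cong)
  also have "\<dots> = (\<Sum>i\<in>UNIV. complex_of_real (d i * (cmod (y$i))^2))"
    by (simp add: complex_norm_square mult.commute del: of_real_power)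
  finally show ?thesis by (simp only: Re_complex_of_real flip: of_real_sum)
qed

lemma cinner_conj_decomp: "cinner w ((U ** M ** adj U) *v w) = cinner (adj U *v w) (M *v (adj U *v w))"
proof -
  have "cinner w ((U ** M ** adj U) *v w) = cinner w (adj (adj U) *v (M *v (adj U *v w)))"
    by (simp add: matrix_vector_mul_assoc matrix_mul_assoc)
  also have "\<dots> = cinner (adj U *v w) (M *v (adj U *v w))" by (rule cinner_adj)
  finally show ?thesis .
qed

lemma pos_decomp: "(\<And>k. d k \<ge> 0) \<Longrightarrow> pos (U ** diagm d ** adj U)"
  unfolding pos_def cinner_conj_decomp Re_cinner_diagm by (auto intro!: sum_nonneg)

lemma hermitian_decomp: "hermitian (U ** diagm d ** adj U)"
  by (simp add: hermitian_def adj_mult matrix_mul_assoc)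

lemma herm_pos_psd:
  assumes h: "hermitian A" and p: "pos A" shows "psd A"
proof -
  have "\<forall>c. is_eigenvalue A c \<longrightarrow> c \<in> \<real> \<and> 0 \<le> Re c"
  proof (intro allI impI)
  fix c assume "is_eigenvalue A c"
  then obtain v where v0: "v \<noteq> 0" and ev: "A *v v = c *s v"
    by (auto simp: is_eigenvalue_def vector_scalar_mult_def)
  have "cinner v (A *v v) = c * complex_of_real ((norm v)^2)"
    by (simp add: ev cinner_smult_right cinner_self)
  moreover have nv: "norm v > 0" using v0 by simp
  ultimately have c: "c = cinner v (A *v v) / complex_of_real ((norm v)^2)" by simp
  have r: "cinner v (A *v v) \<in> \<real>" by (rule hermitian_cinner_real[OF h])
  show "c \<in> \<real> \<and> 0 \<le> Re c"
  proof
    show "c \<in> \<real>" using r c by simp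
    have "Re c = Re (cinner v (A *v v)) / (norm v)^2" using r c
      by (metis Re_divide_of_real of_real_power)
    thus "0 \<le> Re c" using p nv by (simp add: pos_def)
  qed
  qed
  thus ?thesis using h by (simp add: psd_def)
qed

lemma psd_hermitian: "psd A \<Longrightarrow> hermitian A" by (simp add: psd_def)

lemma psd_pos: assumes "psd A" shows "pos A"
proof -
  from spectral[OF psd_hermitian[OF assms]] obtain U d where UU: "adj U ** U = mat 1" and UU': "U ** adj U = mat 1"
   and A: "A = U ** diagm d ** adj U" and ev: "\<forall>k. is_eigenvalue A (complex_of_real (d k))"
    by auto
  have d0: "d k \<ge> 0" for k using ev assms by (auto simp: psd_def)
  show ?thesis unfolding A by (rule pos_decomp) (simp add: d0)
qed

lemma ifm: "(if P then c else 0) * (x::complex) = (if P then c * x else 0)" by simp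

lemma diagm_mult_left: "(diagm a ** M) $ i $ j = complex_of_real (a i) * M $ i $ j"
  unfolding diagm_def matrix_matrix_mult_def by (simp add: ifm)

lemma diagm_mult: "diagm a ** diagm b = diagm (\<lambda>i. a i * b i)"
  by (simp add: vec_eq_iff diagm_mult_left) (simp add: diagm_def)

lemma decomp_mult:
  assumes "adj U ** U = mat 1"
  shows "(U ** diagm a ** adj U) ** (U ** diagm b ** adj U) = U ** diagm (\<lambda>i. a i * b i) ** adj U"
proof -
  have "(U ** diagm a ** adj U) ** (U ** diagm b ** adj U) = U ** diagm a ** (adj U ** U) ** diagm b ** adj U"
    by (simp add: matrix_mul_assoc)
  also have "\<dots> = U ** (diagm a ** diagm b) ** adj U" by (simp add: assms matrix_mul_assoc)
  finally show ?thesis by (simp add: diagm_mult)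
qed

lemma psd_sqrt_exists: assumes "psd A" shows "\<exists>S. psd S \<and> S ** S = A"
proof -
  from spectral[OF psd_hermitian[OF assms]] obtain U d where UU: "adj U ** U = mat 1" and UU': "U ** adj U = mat 1"
   and A: "A = U ** diagm d ** adj U" and ev: "\<forall>k. is_eigenvalue A (complex_of_real (d k))"
    by auto
  have d0: "d k \<ge> 0" for k using ev assms by (auto simp: psd_def)
  define S where "S = U ** diagm (\<lambda>k. sqrt (d k)) ** adj U"
  have "pos S" unfolding S_def by (rule pos_decomp) (simp add: d0)
  moreover have "hermitian S" unfolding S_def by (rule hermitian_decomp)
  ultimately have "psd S" by (simp add: herm_pos_psd)
  moreover have "(\<lambda>k. sqrt (d k) * sqrt (d k)) = d" by (rule ext) (simp add: d0)
  hence "S ** S = A" unfolding S_def decomp_mult[OF UU] A by simp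
  ultimately show ?thesis by (intro exI[of _ S] conjI)
qed

lemma psd_sqrt_both: assumes "psd A" shows "psd (psd_sqrt A) \<and> psd_sqrt A ** psd_sqrt A = A"
  unfolding psd_sqrt_def by (rule someI_ex[OF psd_sqrt_exists[OF assms]])

lemma psd_sqrt: assumes "psd A" shows "psd (psd_sqrt A)" "psd_sqrt A ** psd_sqrt A = A"
  using psd_sqrt_both[OF assms] by auto



lemma mm_diff_left: "((A::complex^'n^'n) - B) ** C = A ** C - B ** C"
  by (simp add: matrix_matrix_mult_def vec_eq_iff algebra_simps sum_subtractf)

lemma mm_diff_right: "(A::complex^'n^'n) ** (B - C) = A ** B - A ** C"
  by (simp add: matrix_matrix_mult_def vec_eq_iff algebra_simps sum_subtractf)

lemma mm_add_left: "((A::complex^'n^'n) + B) ** C = A ** C + B ** C"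
  by (simp add: matrix_matrix_mult_def vec_eq_iff algebra_simps sum.distrib)

lemma diagm_diff: "diagm a - diagm b = diagm (\<lambda>i. a i - b i)"
  by (simp add: diagm_def vec_eq_iff)

lemma decomp_diff: "U ** diagm a ** adj U - U ** diagm b ** adj U = U ** diagm (\<lambda>i. a i - b i) ** adj U"
  by (simp add: mm_diff_left mm_diff_right diagm_diff[symmetric])

lemma mvec_diff_left: "((A::complex^'n^'n) - B) *v x = A *v x - B *v x"
  by (simp add: matrix_vector_mult_def vec_eq_iff algebra_simps sum_subtractf)

lemma meas_psd: "is_measurement E \<Longrightarrow> psd E"
  by (simp add: is_measurement_def psd_def)

lemma meas_compl_psd: assumes "is_measurement E" shows "psd (mat 1 - E)"
proof -
  have hE: "hermitian E" using assms by (simp add: is_measurement_def)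
  have h: "hermitian (mat 1 - E)" using hE by (simp add: hermitian_def adj_diff)
  have "\<forall>c. is_eigenvalue (mat 1 - E) c \<longrightarrow> c \<in> \<real> \<and> 0 \<le> Re c"
  proof (intro allI impI)
    fix c assume "is_eigenvalue (mat 1 - E) c"
    then obtain v where v0: "v \<noteq> 0" and ev: "(mat 1 - E) *v v = (\<chi> j. c * v $ j)"
      by (auto simp: is_eigenvalue_def)
    have "E *v v = (\<chi> j. (1 - c) * v $ j)"
      using ev by (simp add: mvec_diff_left vec_eq_iff algebra_simps)
    hence "is_eigenvalue E (1 - c)" using v0 by (auto simp: is_eigenvalue_def)
    moreover have "\<forall>c. is_eigenvalue E c \<longrightarrow> c \<in> \<real> \<and> 0 \<le> Re c \<and> Re c \<le> 1"
      using assms by (simp add: is_measurement_def)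
    ultimately have "1 - c \<in> \<real> \<and> 0 \<le> Re (1 - c) \<and> Re (1 - c) \<le> 1" by blast
    hence r: "1 - c \<in> \<real>" and le: "Re (1 - c) \<le> 1" by auto
    have "1 - (1 - c) \<in> \<real>" by (rule Reals_diff[OF Reals_1 r])
    hence "c \<in> \<real>" by simp
    moreover have "0 \<le> Re c" using le by simp
    ultimately show "c \<in> \<real> \<and> 0 \<le> Re c" by simp
  qed
  thus "psd (mat 1 - E)" using h by (simp add: psd_def)
qed

lemma meas_compl_pos: assumes "is_measurement E" shows "pos (mat 1 - E)"
  by (rule psd_pos[OF meas_compl_psd[OF assms]])

lemma meas_sqrt:
  assumes "is_measurement E"
  defines "S \<equiv> psd_sqrt E"
  shows "hermitian S" "S ** S = E" "pos S" "pos (S - S ** S)"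
proof -
  have pE: "psd E" using assms by (simp add: meas_psd)
  have pS: "psd S" and SS: "S ** S = E" using psd_sqrt[OF pE] by (simp_all add: S_def)
  show hS: "hermitian S" using pS by (simp add: psd_def)
  show "S ** S = E" by (rule SS)
  show "pos S" using pS by (rule psd_pos)
  from spectral[OF hS] obtain U d where UU: "adj U ** U = mat 1" and UU': "U ** adj U = mat 1"
   and A: "S = U ** diagm d ** adj U" and ev: "\<forall>k. is_eigenvalue S (complex_of_real (d k))"
    by auto
  have d01: "0 \<le> d k \<and> d k \<le> 1" for k
  proof -
    from ev obtain w where w0: "w \<noteq> 0" and ew: "S *v w = (\<chi> j. complex_of_real (d k) * w $ j)"
      by (auto simp: is_eigenvalue_def)
    have dk0: "0 \<le> d k" using ev pS by (auto simp: psd_def)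
    have ew': "S *v w = complex_of_real (d k) *s w" using ew by (simp add: vector_scalar_mult_def)
    have "E *v w = (S ** S) *v w" by (simp add: SS)
    also have "\<dots> = S *v (S *v w)" by (simp add: matrix_vector_mul_assoc)
    also have "\<dots> = complex_of_real (d k * d k) *s w" by (simp add: ew' mvec_smult)
    finally have "is_eigenvalue E (complex_of_real (d k * d k))"
      using w0 by (auto simp: is_eigenvalue_def vector_scalar_mult_def)
    moreover have M: "\<forall>c. is_eigenvalue E c \<longrightarrow> c \<in> \<real> \<and> 0 \<le> Re c \<and> Re c \<le> 1"
      using assms by (simp add: is_measurement_def)
    ultimately have "Re (complex_of_real (d k * d k)) \<le> 1" by blast
    hence dd: "d k * d k \<le> 1" by simp
    have "d k \<le> 1"
    proof (rule ccontr)
      assume "\<not> d k \<le> 1"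
      hence "1 < d k" by simp
      hence "1 < d k * d k" using less_1_mult by blast
      thus False using dd by simp
    qed
    thus ?thesis using dk0 by simp
  qed
  have "S - S ** S = U ** diagm (\<lambda>k. d k - d k * d k) ** adj U"
    unfolding A decomp_mult[OF UU] decomp_diff by simp
  moreover have "0 \<le> d k - d k * d k" for k
  proof -
    have "d k * d k \<le> d k * 1" using d01[of k] by (intro mult_left_mono) auto
    thus ?thesis by simp
  qed
  ultimately show "pos (S - S ** S)" by (simp add: pos_decomp)
qed



type_synonym 'n cm = "complex^'n^'n"

lemma trace_sum: "trace (sum f I) = (\<Sum>i\<in>I. trace (f i :: complex^'n^'n))"
  unfolding trace_def by (simp add: sum.swap[of _ I])

lemma trace_scaleR: "trace (r *\<^sub>R (A::complex^'n^'n)) = of_real r * trace A"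
  unfolding trace_def by (simp add: cscale sum_distrib_left)

lemma Re_trace_scaleR: "Re (trace (r *\<^sub>R (A::complex^'n^'n))) = r * Re (trace A)"
  by (simp add: trace_scaleR)

lemma Re_trace_sum: "Re (trace (sum f I)) = (\<Sum>i\<in>I. Re (trace (f i :: complex^'n^'n)))"
  by (simp add: trace_sum)

lemma ifm1: "(x::complex) * (if P then 1 else 0) = (if P then x else 0)" by simp
lemma ifc1: "cnj (if P then 1 else 0) = (if P then 1 else 0)" by simp

lemma diag_cinner: "cinner (axis k 1) (A *v axis k 1) = A $ k $ k"
  by (simp add: cinner_def matrix_vector_mult_def axis_def ifm ifm1 ifc1 cong: if_cong)

lemma pos_trace: "pos A \<Longrightarrow> 0 \<le> Re (trace A)"
  unfolding trace_def pos_def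
  by (simp add: diag_cinner[symmetric] sum_nonneg)

lemma pos_congr: assumes "pos A" shows "pos (adj C ** A ** C)"
  unfolding pos_def
proof
  fix v
  have "cinner v ((adj C ** A ** C) *v v) = cinner v (adj C *v (A *v (C *v v)))"
    by (simp add: matrix_vector_mul_assoc matrix_mul_assoc)
  also have "\<dots> = cinner (C *v v) (A *v (C *v v))" by (rule cinner_adj)
  finally show "0 \<le> Re (cinner v ((adj C ** A ** C) *v v))" using assms by (simp add: pos_def)
qed

lemma pos_add: "pos A \<Longrightarrow> pos B \<Longrightarrow> pos (A + B)"
  by (simp add: pos_def matrix_vector_mult_add_rdistrib cinner_add_right)

lemma pos_scaleR: "pos A \<Longrightarrow> 0 \<le> r \<Longrightarrow> pos (r *\<^sub>R A)"
proof -
  assume a: "pos A" "0 \<le> r"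
  have "(r *\<^sub>R A) *v v = r *\<^sub>R (A *v v)" for v
    by (simp add: matrix_vector_mult_def vec_eq_iff scaleR_sum_right)
  thus ?thesis using a by (simp add: pos_def cinner_scaleR_right)
qed

lemma pos_zero: "pos 0" by (simp add: pos_def)

lemma pos_sum: "(\<And>i. i \<in> I \<Longrightarrow> pos (f i)) \<Longrightarrow> pos (sum f I)"
  by (induction I rule: infinite_finite_induct) (auto simp: pos_zero pos_add)

lemma inner_trace: "inner W Y = Re (trace (adj W ** (Y::complex^'n^'n)))"
proof -
  have "trace (adj W ** Y) = (\<Sum>j\<in>UNIV. \<Sum>i\<in>UNIV. cnj (W$i$j) * Y$i$j)"
    unfolding trace_def adj_def matrix_matrix_mult_def by simp
  hence "Re (trace (adj W ** Y)) = (\<Sum>j\<in>UNIV. \<Sum>i\<in>UNIV. Re (cnj (W$i$j) * Y$i$j))"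
    by (simp only: Re_sum)
  also have "\<dots> = (\<Sum>i\<in>UNIV. \<Sum>j\<in>UNIV. Re (cnj (W$i$j) * Y$i$j))"
    by (rule sum.swap)
  also have "\<dots> = inner W Y"
    by (simp add: inner_vec_def inner_complex_def)
  finally show ?thesis by simp
qed

lemma norm_sq_trace: "(norm Z)^2 = Re (trace (adj Z ** (Z::complex^'n^'n)))"
  by (simp add: power2_norm_eq_inner inner_trace)

definition tq :: "complex^'n^'n \<Rightarrow> complex^'n^'n \<Rightarrow> real" where
  "tq P Z = Re (trace (adj Z ** P ** Z))"

lemma tq_pos: "pos P \<Longrightarrow> 0 \<le> tq P Z"
  unfolding tq_def by (intro pos_trace pos_congr)

lemma tq_diff: "tq (P - Q) Z = tq P Z - tq Q Z"
  by (simp add: tq_def mm_diff_left mm_diff_right trace_sub)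

lemma tq_add: "tq (P + Q) Z = tq P Z + tq Q Z"
  by (simp add: tq_def mm_add_left matrix_add_ldistrib trace_add)

lemma tq_one: "tq (mat 1) Z = (norm Z)^2"
  by (simp add: tq_def norm_sq_trace)

lemma norm_mult_sq: "(norm (M ** Z))^2 = tq (adj M ** M) (Z::complex^'n^'n)"
  by (simp add: tq_def norm_sq_trace adj_mult matrix_mul_assoc)

lemma contraction:
  fixes Y :: "complex^'n^'n"
  assumes "is_measurement E" shows "norm (psd_sqrt E ** Y) \<le> norm Y"
proof -
  let ?S = "psd_sqrt E"
  have "(norm (?S ** Y))^2 = tq E Y"
    using meas_sqrt[OF assms] by (simp add: norm_mult_sq hermitian_def)
  also have "\<dots> \<le> tq (mat 1) Y"
    using tq_pos[OF meas_compl_pos[OF assms], of Y] by (simp add: tq_diff)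
  also have "\<dots> = (norm Y)^2" by (rule tq_one)
  finally show ?thesis by (simp add: power2_le_iff_abs_le)
qed

lemma gentle:
  assumes E: "is_measurement E" and hG: "hermitian G" and GG: "G ** G = \<rho>" and tr: "trace \<rho> = 1"
  shows "(norm (psd_sqrt E ** G - G))^2 \<le> 1 - acc_prob E \<rho>"
proof -
  let ?S = "psd_sqrt E"
  have hS: "hermitian ?S" and SS: "?S ** ?S = E" and pSS: "pos (?S - ?S ** ?S)"
    using meas_sqrt[OF E] by auto
  have "?S ** G - G = (?S - mat 1) ** G" by (simp add: mm_diff_left)
  hence "(norm (?S ** G - G))^2 = tq (adj (?S - mat 1) ** (?S - mat 1)) G"
    by (simp add: norm_mult_sq)
  also have "adj (?S - mat 1) ** (?S - mat 1) = ((?S ** ?S - ?S) - ?S) + mat 1"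
    using hS by (simp add: adj_diff hermitian_def mm_diff_left mm_diff_right algebra_simps)
  also have "tq \<dots> G = tq (?S ** ?S) G - 2 * tq ?S G + tq (mat 1) G"
    by (simp only: tq_add tq_diff)
  finally have n: "(norm (?S ** G - G))^2 = tq (?S ** ?S) G - 2 * tq ?S G + tq (mat 1) G" .
  have "tq ?S G \<ge> tq (?S ** ?S) G" using tq_pos[OF pSS, of G] by (simp add: tq_diff)
  moreover have "tq (mat 1) G = 1"
    using hG GG tr by (simp add: tq_def hermitian_def)
  moreover have "tq (?S ** ?S) G = acc_prob E \<rho>"
  proof -
    have "trace (adj G ** E ** G) = trace (G ** (E ** G))" using hG by (simp add: hermitian_def matrix_mul_assoc)
    also have "\<dots> = trace ((E ** G) ** G)" by (rule trace_mul_sym)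
    also have "\<dots> = trace (E ** \<rho>)" by (simp add: GG[symmetric] matrix_mul_assoc)
    finally show ?thesis by (simp add: tq_def SS acc_prob_def)
  qed
  ultimately show ?thesis using n by simp
qed



definition Sq :: "(nat \<Rightarrow> complex^'n^'n) \<Rightarrow> nat \<Rightarrow> complex^'n^'n" where
  "Sq E i = psd_sqrt (E i)"

definition Phi :: "(nat \<Rightarrow> complex^'n^'n) \<Rightarrow> nat \<Rightarrow> complex^'n^'n \<Rightarrow> complex^'n^'n" where
  "Phi E m X = (1 / real m) *\<^sub>R (\<Sum>i<m. Sq E i ** X ** Sq E i)"

definition Lam :: "(nat \<Rightarrow> complex^'n^'n) \<Rightarrow> nat \<Rightarrow> complex^'n^'n \<Rightarrow> complex^'n^'n" where
  "Lam E m Z = (1 / real m) *\<^sub>R (\<Sum>i<m. Sq E i ** Z)"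

lemma mm_scaleR_right: "(A::complex^'n^'n) ** (r *\<^sub>R B) = r *\<^sub>R (A ** B)"
  by (simp add: matrix_scalar_ac scalar_matrix_assoc)

lemma mm_scaleR_left: "(r *\<^sub>R A) ** (B::complex^'n^'n) = r *\<^sub>R (A ** B)"
  by (simp add: scalar_matrix_assoc)

lemma mm_sum_right: "(A::complex^'n^'n) ** sum f I = (\<Sum>i\<in>I. A ** f i)"
  by (induction I rule: infinite_finite_induct) (auto simp: matrix_add_ldistrib)

lemma linear_Phi: fixes E :: "nat \<Rightarrow> complex^'n^'n" shows "linear (Phi E m)"
proof (rule linearI)
  fix X Y :: "complex^'n^'n" and r :: real
  show "Phi E m (X + Y) = Phi E m X + Phi E m Y"
    by (simp add: Phi_def matrix_add_ldistrib mm_add_left sum.distrib scaleR_add_right)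
  show "Phi E m (r *\<^sub>R X) = r *\<^sub>R Phi E m X"
    by (simp add: Phi_def mm_scaleR_right mm_scaleR_left scaleR_sum_right[symmetric])
qed

lemma linear_Lam: fixes E :: "nat \<Rightarrow> complex^'n^'n" shows "linear (Lam E m)"
proof (rule linearI)
  fix X Y :: "complex^'n^'n" and r :: real
  show "Lam E m (X + Y) = Lam E m X + Lam E m Y"
    by (simp add: Lam_def matrix_add_ldistrib sum.distrib scaleR_add_right)
  show "Lam E m (r *\<^sub>R X) = r *\<^sub>R Lam E m X"
    by (simp add: Lam_def mm_scaleR_right scaleR_sum_right[symmetric])
qed

lemma linear_funpow: fixes f :: "'a::real_vector \<Rightarrow> 'a" assumes "linear f" shows "linear (f ^^ n)"
proof (rule linearI)
  show "(f ^^ n) (x + y) = (f ^^ n) x + (f ^^ n) y" for x y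
    by (induction n) (simp_all add: linear_add[OF assms])
  show "(f ^^ n) (r *\<^sub>R x) = r *\<^sub>R (f ^^ n) x" for r x
    by (induction n) (simp_all add: linear_cmul[OF assms])
qed

fun Qt :: "nat \<Rightarrow> nat \<Rightarrow> test" where
  "Qt m 0 = [(1, Success)]"
| "Qt m (Suc t) = concat (map (\<lambda>i. map (\<lambda>(w,p). (w / real m, Meas i p Failure)) (Qt m t)) [0..<m])"

definition QQ :: "nat \<Rightarrow> nat \<Rightarrow> test" where
  "QQ m T = concat (map (\<lambda>t. map (\<lambda>(w,p). (w / real T, p)) (Qt m t)) [0..<T])"

lemma Qt_props: "(w,p) \<in> set (Qt m t) \<Longrightarrow> 0 \<le> w \<and> uses_below m p \<and> depth p = t"
  by (induction t arbitrary: w p) auto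

lemma sl_concat: "sum_list (map f (concat xss)) = sum_list (map (\<lambda>xs. sum_list (map f xs)) xss)"
  by (induction xss) auto

lemma sl_concat_map: "sum_list (map f (concat (map h xs))) = sum_list (map (\<lambda>x. sum_list (map f (h x))) xs)"
  by (induction xs) auto

lemma sl_upt: "sum_list (map f [0..<m]) = (\<Sum>i<m. f i)"
  by (induction m) auto

lemma sl_div: "sum_list (map (\<lambda>(w,p). w) (map (\<lambda>(w,p). (w / (c::real), g p)) L)) = sum_list (map (\<lambda>(w,p). w) L) / c"
  by (induction L) (auto simp: add_divide_distrib)

lemma sl_div_state:
  fixes F :: "'q \<Rightarrow> 'v::real_vector"
  shows "sum_list (map (\<lambda>(w,p). w *\<^sub>R F p) (map (\<lambda>(w,p). (w / (c::real), g p)) L))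
   = (1 / c) *\<^sub>R sum_list (map (\<lambda>(w,p). w *\<^sub>R F (g p)) L)"
  by (induction L) (auto simp: scaleR_add_right scaleR_scaleR)

lemma Qt_weight: "m > 0 \<Longrightarrow> (\<Sum>(w,p)\<leftarrow>Qt m t. w) = 1"
proof (induction t)
  case 0 thus ?case by simp
next
  case (Suc t)
  have "(\<Sum>(w,p)\<leftarrow>Qt m (Suc t). w) = (\<Sum>i<m. (\<Sum>(w,p)\<leftarrow>Qt m t. w) / real m)"
    by (simp only: Qt.simps sl_concat_map sl_div sl_upt)
  also have "\<dots> = 1" using Suc by simp
  finally show ?case .
qed

lemma QQ_valid: assumes "m > 0" "T > 0" shows "valid_test m T (QQ m T)"
proof -
  have A: "\<forall>(w,p)\<in>set (QQ m T). 0 \<le> w \<and> uses_below m p \<and> depth p \<le> T"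
  proof
    fix x assume "x \<in> set (QQ m T)"
    then obtain t w p where "t < T" "(w,p) \<in> set (Qt m t)" "x = (w / real T, p)"
      by (auto simp: QQ_def)
    thus "case x of (w,p) \<Rightarrow> 0 \<le> w \<and> uses_below m p \<and> depth p \<le> T"
      using Qt_props[of w p m t] by auto
  qed
  have "(\<Sum>(w,p)\<leftarrow>QQ m T. w) = (\<Sum>t<T. (\<Sum>(w,p)\<leftarrow>Qt m t. w) / real T)"
    by (simp only: QQ_def sl_concat_map sl_div sl_upt)
  also have "\<dots> = 1" using assms by (simp add: Qt_weight)
  finally show ?thesis using A by (simp add: valid_test_def)
qed

lemma succ_state_Qt: "succ_state E (Qt m t) X = (Phi E m ^^ t) X"
proof (induction t arbitrary: X)
  case 0 thus ?case by (simp add: succ_state_def)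
next
  case (Suc t)
  have "succ_state E (Qt m (Suc t)) X = (\<Sum>i<m. (1 / real m) *\<^sub>R succ_state E (Qt m t) (Sq E i ** X ** Sq E i))"
    by (simp only: succ_state_def Qt.simps sl_concat_map sl_div_state sl_upt
        succ_part.simps add_0_right Sq_def)
  also have "\<dots> = (Phi E m ^^ t) (Phi E m X)"
  proof -
    have L: "linear (Phi E m ^^ t)" by (rule linear_funpow[OF linear_Phi])
    have "(Phi E m ^^ t) (Phi E m X) = (1/real m) *\<^sub>R (\<Sum>i<m. (Phi E m ^^ t) (Sq E i ** X ** Sq E i))"
      by (simp only: Phi_def[of E m X] linear_cmul[OF L] linear_sum[OF L])
    thus ?thesis by (simp add: Suc scaleR_sum_right)
  qed
  also have "\<dots> = (Phi E m ^^ Suc t) X" by (simp add: funpow_swap1)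
  finally show ?case .
qed

lemma succ_state_QQ: "succ_state E (QQ m T) X = (1 / real T) *\<^sub>R (\<Sum>t<T. (Phi E m ^^ t) X)"
proof -
  have "succ_state E (QQ m T) X = (\<Sum>t<T. (1 / real T) *\<^sub>R succ_state E (Qt m t) X)"
    by (simp only: succ_state_def QQ_def sl_concat_map sl_div_state sl_upt)
  thus ?thesis by (simp add: succ_state_Qt scaleR_sum_right)
qed



lemma psd_trace_prod:
  assumes P: "psd P" and Y: "pos Y" shows "0 \<le> Re (trace (P ** Y))"
proof -
  let ?S = "psd_sqrt P"
  have hS: "hermitian ?S" and SS: "?S ** ?S = P" using psd_sqrt[OF P] by (auto simp: psd_def)
  have "trace (P ** Y) = trace (?S ** (?S ** Y))" by (simp only: matrix_mul_assoc SS)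
  also have "\<dots> = trace ((?S ** Y) ** ?S)" by (rule trace_mul_sym)
  also have "\<dots> = trace (adj ?S ** Y ** ?S)" using hS by (simp add: hermitian_def)
  finally show ?thesis using pos_trace[OF pos_congr[OF Y]] by simp
qed

lemma Sq_facts: assumes "is_measurement (E i)"
  shows "hermitian (Sq E i)" "Sq E i ** Sq E i = E i"
  using meas_sqrt[OF assms] by (simp_all add: Sq_def)

lemma Phi_pos:
  assumes meas: "\<forall>i<m. is_measurement (E i)" and X: "pos X" shows "pos (Phi E m X)"
  unfolding Phi_def
proof (rule pos_scaleR[OF pos_sum])
  fix i assume "i \<in> {..<m}"
  hence "is_measurement (E i)" using meas by simp
  hence h: "hermitian (Sq E i)" by (rule Sq_facts)
  show "pos (Sq E i ** X ** Sq E i)" using pos_congr[OF X, of "Sq E i"] h by (simp add: hermitian_def)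
qed simp

lemma Phi_trace:
  assumes meas: "\<forall>i<m. is_measurement (E i)"
  shows "Re (trace (Phi E m X)) = (1 / real m) * (\<Sum>i<m. Re (trace (E i ** X)))"
proof -
  have "trace (Sq E i ** X ** Sq E i) = trace (E i ** X)" if "i < m" for i
  proof -
    have "trace (Sq E i ** X ** Sq E i) = trace (Sq E i ** (Sq E i ** X))" by (rule trace_mul_sym)
    moreover have "Sq E i ** Sq E i = E i" using meas that by (simp add: Sq_facts)
    ultimately show ?thesis by (simp add: matrix_mul_assoc)
  qed
  thus ?thesis by (simp add: Phi_def Re_trace_scaleR Re_trace_sum)
qed

lemma final_real:
  fixes x a :: real
  assumes "0 \<le> x" "0 \<le> a" "1 - x \<le> a" shows "1 - 2 * sqrt x \<le> a"
proof (cases "x \<le> 4")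
  case True
  hence "sqrt x \<le> 2" by (metis real_sqrt_le_mono real_sqrt_four)
  hence "sqrt x * sqrt x \<le> 2 * sqrt x" using assms(1) by (intro mult_right_mono) auto
  hence "x \<le> 2 * sqrt x" using assms(1) by simp
  thus ?thesis using assms by linarith
next
  case False
  hence "2 \<le> sqrt x" by (metis le_cases real_sqrt_four real_sqrt_le_mono)
  thus ?thesis using assms by linarith
qed

lemma part3:
  fixes E :: "nat \<Rightarrow> complex^'n^'n"
  assumes meas: "\<forall>i<m. is_measurement (E i)" and m0: "m > 0" and T0: "T > 0"
    and dens: "density \<rho>" and lam: "lam > 0" and sp: "succ_prob E (QQ m T) \<rho> \<ge> lam" and i: "i < m"
  shows "acc_prob (E i) (out_state E (QQ m T) \<rho>) \<ge> 1 - 2 * sqrt (real m / (lam * real T))"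
proof -
  define X where "X t = (Phi E m ^^ t) \<rho>" for t
  define P where "P t = Re (trace (X t))" for t
  define Y where "Y = succ_state E (QQ m T) \<rho>"
  define s where "s = Re (trace Y)"
  have Y: "Y = (1 / real T) *\<^sub>R (\<Sum>t<T. X t)" by (simp add: Y_def X_def succ_state_QQ)
  have prho: "pos \<rho>" using dens by (simp add: density_def psd_pos)
  have tr1: "Re (trace \<rho>) = 1" using dens by (simp add: density_def)
  have posX: "pos (X t)" for t
  proof (induction t)
    case 0 thus ?case using prho by (simp add: X_def)
  next
    case (Suc t) thus ?case using Phi_pos[OF meas] by (simp add: X_def)
  qed
  have posY: "pos Y" unfolding Y by (intro pos_scaleR pos_sum posX) simp
  have PS: "(\<Sum>j<m. Re (trace (E j ** X t))) = real m * P (Suc t)" for t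
    using Phi_trace[OF meas, of "X t"] m0 by (simp add: P_def X_def)
  have s: "s = (1 / real T) * (\<Sum>t<T. P t)"
    by (simp add: s_def Y Re_trace_scaleR Re_trace_sum P_def)
  have EY: "Re (trace (E j ** Y)) = (1 / real T) * (\<Sum>t<T. Re (trace (E j ** X t)))" for j
    by (simp add: Y mm_scaleR_right mm_sum_right Re_trace_scaleR Re_trace_sum)
  have sumEY: "(\<Sum>j<m. Re (trace (E j ** Y))) = (real m / real T) * (\<Sum>t<T. P (Suc t))"
  proof -
    have "(\<Sum>j<m. Re (trace (E j ** Y))) = (1 / real T) * (\<Sum>j<m. \<Sum>t<T. Re (trace (E j ** X t)))"
      by (simp add: EY sum_distrib_left)
    also have "(\<Sum>j<m. \<Sum>t<T. Re (trace (E j ** X t))) = (\<Sum>t<T. \<Sum>j<m. Re (trace (E j ** X t)))"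
      by (rule sum.swap)
    also have "\<dots> = (\<Sum>t<T. real m * P (Suc t))" by (simp add: PS)
    finally show ?thesis by (simp add: sum_distrib_left)
  qed
  have le_j: "Re (trace (E j ** Y)) \<le> s" if "j < m" for j
  proof -
    have "0 \<le> Re (trace ((mat 1 - E j) ** Y))"
      by (rule psd_trace_prod[OF meas_compl_psd posY]) (use meas that in simp)
    thus ?thesis by (simp add: s_def mm_diff_left trace_sub)
  qed
  have ge0: "0 \<le> Re (trace (E i ** Y))"
    by (rule psd_trace_prod[OF meas_psd posY]) (use meas i in simp)
  have "s - Re (trace (E i ** Y)) \<le> (\<Sum>j<m. s - Re (trace (E j ** Y)))"
    by (rule member_le_sum) (use i le_j in auto)
  also have "\<dots> = real m * s - (real m / real T) * (\<Sum>t<T. P (Suc t))"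
    by (simp add: sum_subtractf sumEY)
  also have "\<dots> = (real m / real T) * (\<Sum>t<T. P t - P (Suc t))"
    by (simp add: s sum_subtractf algebra_simps)
  also have "\<dots> = (real m / real T) * (P 0 - P T)" by (simp only: sum_lessThan_telescope')
  also have "\<dots> \<le> real m / real T"
  proof -
    have "P 0 = 1" using tr1 by (simp add: P_def X_def)
    moreover have "P T \<ge> 0" by (simp add: P_def pos_trace posX)
    ultimately have "(real m / real T) * (P 0 - P T) \<le> (real m / real T) * 1"
      by (intro mult_left_mono) auto
    thus ?thesis by simp
  qed
  finally have key: "s - real m / real T \<le> Re (trace (E i ** Y))" by simp
  have slam: "lam \<le> s" using sp by (simp add: s_def Y_def succ_prob_def)
  hence spos: "s > 0" using lam by simp
  have acc: "acc_prob (E i) (out_state E (QQ m T) \<rho>) = Re (trace (E i ** Y)) / s"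
    by (simp add: acc_prob_def out_state_def Y_def[symmetric] s_def[symmetric] succ_prob_def mm_scaleR_right Re_trace_scaleR)
  have "1 - real m / (lam * real T) \<le> 1 - real m / (s * real T)"
    using slam lam T0 by (intro diff_left_mono divide_left_mono mult_right_mono mult_pos_pos) auto
  also have "\<dots> = (s - real m / real T) / s" using spos by (simp add: field_simps)
  also have "\<dots> \<le> Re (trace (E i ** Y)) / s" using key spos by (simp add: divide_right_mono)
  finally have A: "1 - real m / (lam * real T) \<le> acc_prob (E i) (out_state E (QQ m T) \<rho>)" using acc by simp
  have B: "0 \<le> acc_prob (E i) (out_state E (QQ m T) \<rho>)" using acc ge0 spos by simp
  show ?thesis by (rule final_real[OF _ B A]) (use lam in simp)
qed



lemma sum_real_lt: "(\<Sum>t<T. real t) = real T * (real T - 1) / 2"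
  by (induction T) (auto simp: field_simps)

lemma norm_diff_sq': "(norm (Z - G))^2 = (norm Z)^2 - 2 * inner G Z + (norm G)^2"
  by (simp add: power2_norm_eq_inner inner_diff_left inner_diff_right inner_commute)

lemma part2:
  fixes E :: "nat \<Rightarrow> complex^'n^'n"
  assumes meas: "\<forall>i<m. is_measurement (E i)" and m0: "m > 0" and T0: "T > 0"
    and dens: "density \<rho>" and eps: "\<epsilon> \<ge> 0" and acc: "\<forall>i<m. acc_prob (E i) \<rho> \<ge> 1 - \<epsilon>"
  shows "succ_prob E (QQ m T) \<rho> \<ge> 1 - real T * sqrt \<epsilon>"
proof -
  define G where "G = psd_sqrt \<rho>"
  have prho: "psd \<rho>" and tr: "trace \<rho> = 1" using dens by (auto simp: density_def)
  have hG: "hermitian G" and GG: "G ** G = \<rho>" using psd_sqrt[OF prho] by (auto simp: G_def psd_def)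
  have adjG: "adj G = G" using hG by (simp add: hermitian_def)
  have "(norm G)^2 = 1" using tr by (simp add: norm_sq_trace adjG GG)
  hence "norm G = 1 \<or> norm G = - 1" by (simp add: power2_eq_1_iff)
  hence nG: "norm G = 1" using norm_ge_zero[of G] by linarith
  define L where "L = Lam E m"
  define F where "F = Phi E m"
  have linL: "linear L" by (simp add: L_def linear_Lam)
  have linF: "linear F" by (simp add: F_def linear_Phi)
  have herm: "hermitian (Sq E i)" if "i < m" for i by (rule Sq_facts) (use meas that in simp)
  have contr: "norm (Sq E i ** Y) \<le> norm Y" if "i < m" for i and Y :: "complex^'n^'n"
    unfolding Sq_def by (rule contraction) (use meas that in simp)
  have Lcontr: "norm (L Y) \<le> norm Y" for Y :: "complex^'n^'n"
  proof -
    have "norm (\<Sum>i<m. Sq E i ** Y) \<le> real (card {..<m}) * norm Y"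
      by (rule sum_norm_bound) (simp add: contr)
    thus ?thesis using m0 by (simp add: L_def Lam_def field_simps)
  qed
  have gent: "norm (Sq E i ** G - G) \<le> sqrt \<epsilon>" if "i < m" for i
  proof -
    have "(norm (Sq E i ** G - G))^2 \<le> 1 - acc_prob (E i) \<rho>"
      unfolding Sq_def by (rule gentle[OF _ hG GG tr]) (use meas that in simp)
    also have "\<dots> \<le> \<epsilon>" using spec[OF acc, of i] that by linarith
    finally show ?thesis by (rule real_le_rsqrt)
  qed
  have LG: "norm (L G - G) \<le> sqrt \<epsilon>"
  proof -
    have sG: "(\<Sum>i<m. G) = real m *\<^sub>R G"
      using sum_constant_scaleR[of G "{..<m}"] by simp
    have "G = (1 / real m) *\<^sub>R (\<Sum>i<m. G)" using m0 by (simp only: sG scaleR_scaleR) simp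
    hence "L G - G = (1 / real m) *\<^sub>R (\<Sum>i<m. Sq E i ** G) - (1 / real m) *\<^sub>R (\<Sum>i<m. G)"
      by (simp add: L_def Lam_def)
    also have "\<dots> = (1 / real m) *\<^sub>R (\<Sum>i<m. Sq E i ** G - G)"
      by (simp only: sum_subtractf scaleR_diff_right)
    finally have "L G - G = (1 / real m) *\<^sub>R (\<Sum>i<m. Sq E i ** G - G)" .
    moreover have "norm (\<Sum>i<m. Sq E i ** G - G) \<le> real (card {..<m}) * sqrt \<epsilon>"
      by (rule sum_norm_bound) (simp add: gent)
    ultimately show ?thesis using m0 by (simp add: field_simps)
  qed
  have D: "norm ((L ^^ t) G - G) \<le> real t * sqrt \<epsilon>" for t
  proof (induction t)
    case 0 thus ?case by simp
  next
    case (Suc t)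
    have "(L ^^ Suc t) G - G = L ((L ^^ t) G - G) + (L G - G)"
      by (simp add: linear_diff[OF linL])
    hence "norm ((L ^^ Suc t) G - G) \<le> norm (L ((L ^^ t) G - G)) + norm (L G - G)"
      by (metis norm_triangle_ineq)
    also have "\<dots> \<le> real t * sqrt \<epsilon> + sqrt \<epsilon>"
      using Lcontr[of "(L ^^ t) G - G"] Suc LG by linarith
    finally show ?case by (simp add: algebra_simps)
  qed
  have H: "\<forall>Z. Re (trace ((F ^^ t) (Z ** adj Z))) \<ge> 2 * inner G ((L ^^ t) Z) - 1" for t
  proof (induction t)
    case 0
    show ?case
    proof
      fix Z :: "complex^'n^'n"
      have "trace (Z ** adj Z) = trace (adj Z ** Z)" by (rule trace_mul_sym)
      hence "Re (trace (Z ** adj Z)) = (norm Z)^2" by (simp add: norm_sq_trace)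
      moreover have "0 \<le> (norm (Z - G))^2" by simp
      ultimately show "Re (trace ((F ^^ 0) (Z ** adj Z))) \<ge> 2 * inner G ((L ^^ 0) Z) - 1"
        using nG by (simp add: norm_diff_sq')
    qed
  next
    case (Suc t)
    show ?case
    proof
      fix Z :: "complex^'n^'n"
      have LF: "linear (F ^^ t)" by (rule linear_funpow[OF linF])
      have LL: "linear (L ^^ t)" by (rule linear_funpow[OF linL])
      have W: "Sq E i ** (Z ** adj Z) ** Sq E i = (Sq E i ** Z) ** adj (Sq E i ** Z)" if "i < m" for i
        using herm[OF that] by (simp add: adj_mult hermitian_def matrix_mul_assoc)
      have "(F ^^ Suc t) (Z ** adj Z) = (F ^^ t) (F (Z ** adj Z))" by (simp add: funpow_swap1)
      also have "F (Z ** adj Z) = (1 / real m) *\<^sub>R (\<Sum>i<m. (Sq E i ** Z) ** adj (Sq E i ** Z))"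
        by (simp add: F_def Phi_def W)
      finally have "Re (trace ((F ^^ Suc t) (Z ** adj Z)))
          = (1 / real m) * (\<Sum>i<m. Re (trace ((F ^^ t) ((Sq E i ** Z) ** adj (Sq E i ** Z)))))"
        by (simp add: linear_cmul[OF LF] linear_sum[OF LF] Re_trace_scaleR Re_trace_sum)
      also have "\<dots> \<ge> (1 / real m) * (\<Sum>i<m. 2 * inner G ((L ^^ t) (Sq E i ** Z)) - 1)"
        using Suc.IH by (intro mult_left_mono sum_mono) auto
      also have "(1 / real m) * (\<Sum>i<m. 2 * inner G ((L ^^ t) (Sq E i ** Z)) - 1)
          = 2 * inner G ((L ^^ t) (L Z)) - 1"
        using m0 by (simp add: L_def Lam_def linear_cmul[OF LL[unfolded L_def]] linear_sum[OF LL[unfolded L_def]]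
            inner_sum_right sum_subtractf sum_distrib_left field_simps)
      also have "(L ^^ t) (L Z) = (L ^^ Suc t) Z" by (simp add: funpow_swap1)
      finally show "Re (trace ((F ^^ Suc t) (Z ** adj Z))) \<ge> 2 * inner G ((L ^^ Suc t) Z) - 1" .
    qed
  qed
  have Pt: "Re (trace ((F ^^ t) \<rho>)) \<ge> 1 - 2 * real t * sqrt \<epsilon>" for t
  proof -
    have "Re (trace ((F ^^ t) \<rho>)) \<ge> 2 * inner G ((L ^^ t) G) - 1"
      using H[of t] adjG GG by metis
    moreover have "inner G ((L ^^ t) G) = inner G G + inner G ((L ^^ t) G - G)"
      by (simp add: inner_diff_right)
    moreover have "inner G G = 1" using nG by (simp add: power2_norm_eq_inner[symmetric])
    moreover have "\<bar>inner G ((L ^^ t) G - G)\<bar> \<le> real t * sqrt \<epsilon>"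
      using Cauchy_Schwarz_ineq2[of G "(L ^^ t) G - G"] nG D[of t] by simp
    ultimately show ?thesis by linarith
  qed
  have "succ_prob E (QQ m T) \<rho> = (1 / real T) * (\<Sum>t<T. Re (trace ((F ^^ t) \<rho>)))"
    by (simp add: succ_prob_def succ_state_QQ F_def Re_trace_scaleR Re_trace_sum)
  also have "\<dots> \<ge> (1 / real T) * (\<Sum>t<T. 1 - 2 * real t * sqrt \<epsilon>)"
    using Pt by (intro mult_left_mono sum_mono) auto
  also have "(\<Sum>t<T. 1 - 2 * real t * sqrt \<epsilon>) = real T - 2 * sqrt \<epsilon> * (\<Sum>t<T. real t)"
    by (simp add: sum_subtractf sum_distrib_left mult_ac)
  also have "(1 / real T) * (real T - 2 * sqrt \<epsilon> * (\<Sum>t<T. real t)) = 1 - (real T - 1) * sqrt \<epsilon>"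
    using T0 by (simp add: sum_real_lt field_simps)
  also have "1 - (real T - 1) * sqrt \<epsilon> \<ge> 1 - real T * sqrt \<epsilon>"
    using eps by (simp add: algebra_simps)
  finally show ?thesis .
qed


theorem lemma22:
  fixes E :: "nat \<Rightarrow> complex^'n^'n" and m T :: nat
  assumes "\<forall>i<m. is_measurement (E i)"
    and "T > 0"
  shows "\<exists>Q. valid_test m T Q \<and>
     (\<forall>\<rho>0 \<epsilon>. density \<rho>0 \<and> \<epsilon> \<ge> 0 \<and> (\<forall>i<m. acc_prob (E i) \<rho>0 \<ge> 1 - \<epsilon>)
        \<longrightarrow> succ_prob E Q \<rho>0 \<ge> 1 - real T * sqrt \<epsilon>) \<and>
     (\<forall>\<rho>0 lam. density \<rho>0 \<and> lam > 0 \<and> succ_prob E Q \<rho>0 \<ge> lam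
        \<longrightarrow> (\<forall>i<m. acc_prob (E i) (out_state E Q \<rho>0) \<ge> 1 - 2 * sqrt (real m / (lam * real T))))"
proof (cases "m = 0")
  case True
  define Q :: test where "Q = [(1, Success)]"
  have v: "valid_test m T Q" by (simp add: valid_test_def Q_def)
  have sp: "succ_prob E Q \<rho> = Re (trace \<rho>)" for \<rho> by (simp add: succ_prob_def succ_state_def Q_def)
  have P2: "\<forall>\<rho>0 \<epsilon>. density \<rho>0 \<and> \<epsilon> \<ge> 0 \<and> (\<forall>i<m. acc_prob (E i) \<rho>0 \<ge> 1 - \<epsilon>)
        \<longrightarrow> succ_prob E Q \<rho>0 \<ge> 1 - real T * sqrt \<epsilon>"
    by (simp add: sp density_def)
  have P3: "\<forall>\<rho>0 lam. density \<rho>0 \<and> lam > 0 \<and> succ_prob E Q \<rho>0 \<ge> lam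
        \<longrightarrow> (\<forall>i<m. acc_prob (E i) (out_state E Q \<rho>0) \<ge> 1 - 2 * sqrt (real m / (lam * real T)))"
    using True by simp
  show ?thesis using v P2 P3 by (intro exI[of _ Q] conjI)
next
  case False
  hence m0: "m > 0" by simp
  have v: "valid_test m T (QQ m T)" by (rule QQ_valid[OF m0 assms(2)])
  have P2: "\<forall>\<rho>0 \<epsilon>. density \<rho>0 \<and> \<epsilon> \<ge> 0 \<and> (\<forall>i<m. acc_prob (E i) \<rho>0 \<ge> 1 - \<epsilon>)
        \<longrightarrow> succ_prob E (QQ m T) \<rho>0 \<ge> 1 - real T * sqrt \<epsilon>"
  proof (intro allI impI)
    fix \<rho>0 :: "complex^'n^'n" and \<epsilon> :: real
    assume h: "density \<rho>0 \<and> \<epsilon> \<ge> 0 \<and> (\<forall>i<m. acc_prob (E i) \<rho>0 \<ge> 1 - \<epsilon>)"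
    show "succ_prob E (QQ m T) \<rho>0 \<ge> 1 - real T * sqrt \<epsilon>"
      using h by (intro part2[OF assms(1) m0 assms(2)]) simp_all
  qed
  have P3: "\<forall>\<rho>0 lam. density \<rho>0 \<and> lam > 0 \<and> succ_prob E (QQ m T) \<rho>0 \<ge> lam
        \<longrightarrow> (\<forall>i<m. acc_prob (E i) (out_state E (QQ m T) \<rho>0) \<ge> 1 - 2 * sqrt (real m / (lam * real T)))"
  proof (intro allI impI)
    fix \<rho>0 :: "complex^'n^'n" and lam :: real and i :: nat
    assume h: "density \<rho>0 \<and> lam > 0 \<and> succ_prob E (QQ m T) \<rho>0 \<ge> lam" and i: "i < m"
    show "acc_prob (E i) (out_state E (QQ m T) \<rho>0) \<ge> 1 - 2 * sqrt (real m / (lam * real T))"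
      using h i by (intro part3[OF assms(1) m0 assms(2)]) simp_all
  qed
  show ?thesis using v P2 P3 by (intro exI[of _ "QQ m T"] conjI)
qed

end
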